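(* Let $k,n\ge1$, $T:\{0,1\}^k\to\{0,1\}$ a truth table, and $\gamma\in\mathbb R$. For every triple $(\mathbf z^{[1]},\mathbf z^{[0]},\mathbf z^{[-1]})$ of $n$-bit strings with configuration basis numbers $\mathbf n=(n_s)_{s\in\{0,1\}^3}$, $$\mathbf E_\sigma\Big[\exp\Big(-\tfrac{i\gamma}{2}\big(\mathbf 1[\mathbf z^{[1]}\vdash\sigma]-\mathbf 1[\mathbf z^{[-1]}\vdash\sigma]\big)\Big)\mathbf 1[\mathbf z^{[0]}\vdash\sigma]\Big]=2^{-k}\sum_{\mathbf y\in\{0,1\}^3}\sum_{\mathbf k\in\mathcal P(k)}\big|\mathcal Z(\mathbf y,\mathbf k)\big|\Big(\prod_{s\in\{0,1\}^3}\Big(\frac{n_s+n_{\bar s}}{n}\Big)^{k_s}\Big)\exp\Big(-\tfrac{i\gamma}{2}(y^{[1]}-y^{[-1]})\Big)y^{[0]}.$$ In particular, this expectation depends on the triple only through the reduced configuration basis numbers $n_{0ab}+n_{1\bar a\bar b}$, $a,b\in\{0,1\}$, and is a polynomial in them.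
   Context: A clause on $n$ variables is $\sigma=((l_0,\nu_0),\dots,(l_{k-1},\nu_{k-1}))$ with $l_q\in\{0,\dots,n-1\}$, $\nu_q\in\{0,1\}$; $\mathbf x\in\{0,1\}^n$ satisfies $\sigma$ ($\mathbf x\vdash\sigma$) iff $T(x_{l_0}\oplus\nu_0,\dots,x_{l_{k-1}}\oplus\nu_{k-1})=1$. A random clause has all $l_q$ independent uniform in $\{0,\dots,n-1\}$ (repetitions allowed) and all $\nu_q$ independent uniform in $\{0,1\}$; $\mathbf E_\sigma$ is expectation over it. Configuration basis numbers of a triple of $q$-bit strings: $q_s=|\{j:(w^{[1]}_j,w^{[0]}_j,w^{[-1]}_j)=s\}|$, $s=s^{[1]}s^{[0]}s^{[-1]}\in\{0,1\}^3$; $\bar s$ (and $\bar a$ for a bit $a$) denotes complement. $\mathcal P(k)$ is the set of families $(k_s)_{s\in\{0,1\}^3}$ of nonnegative integers summing to $k$. $\mathcal Z(\mathbf y,\mathbf k)$ is the set of triples $(\mathbf w^{[1]},\mathbf w^{[0]},\mathbf w^{[-1]})$ of $k$-bit strings with $T(\mathbf w^{[t]})=y^{[t]}$ for all $t\in\{1,0,-1\}$ and configuration basis numbers $\mathbf k$. *)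

theory Defs
  imports Complex_Main
begin

text \<open>Bits are booleans (True = 1). A bit string is a bool list; a clause on n variables is a
list of pairs (l, nu) with l < n. A truth table is T :: bool list => bool, applied to k-bit lists.\<close>

type_synonym clause = "(nat \<times> bool) list"
type_synonym config = "bool \<times> bool \<times> bool"

definition clauses :: "nat \<Rightarrow> nat \<Rightarrow> clause set" where
  "clauses n k = {\<sigma>. length \<sigma> = k \<and> (\<forall>p\<in>set \<sigma>. fst p < n)}"

definition sat :: "(bool list \<Rightarrow> bool) \<Rightarrow> bool list \<Rightarrow> clause \<Rightarrow> bool" where
  "sat T x \<sigma> = T (map (\<lambda>(l, \<nu>). (x ! l) \<noteq> \<nu>) \<sigma>)"

definition clause_expect :: "nat \<Rightarrow> nat \<Rightarrow> (clause \<Rightarrow> complex) \<Rightarrow> complex" where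
  "clause_expect n k f = (\<Sum>\<sigma>\<in>clauses n k. f \<sigma>) / of_nat (card (clauses n k))"

definition bitv :: "bool \<Rightarrow> complex" where
  "bitv b = (if b then 1 else 0)"

definition cbn :: "nat \<Rightarrow> bool list \<Rightarrow> bool list \<Rightarrow> bool list \<Rightarrow> config \<Rightarrow> nat" where
  "cbn q w1 w0 wm s = card {j. j < q \<and> (w1 ! j, w0 ! j, wm ! j) = s}"

definition ccompl :: "config \<Rightarrow> config" where
  "ccompl s = (case s of (a, b, c) \<Rightarrow> (\<not> a, \<not> b, \<not> c))"

definition Pk :: "nat \<Rightarrow> (config \<Rightarrow> nat) set" where
  "Pk k = {kk. (\<Sum>s\<in>UNIV. kk s) = k}"

definition Zset :: "(bool list \<Rightarrow> bool) \<Rightarrow> nat \<Rightarrow> config \<Rightarrow> (config \<Rightarrow> nat)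
    \<Rightarrow> (bool list \<times> bool list \<times> bool list) set" where
  "Zset T k y kk = {(w1, w0, wm). length w1 = k \<and> length w0 = k \<and> length wm = k \<and>
      T w1 = fst y \<and> T w0 = fst (snd y) \<and> T wm = snd (snd y) \<and> cbn k w1 w0 wm = kk}"

definition phase :: "real \<Rightarrow> bool \<Rightarrow> bool \<Rightarrow> complex" where
  "phase \<gamma> a b = exp (- (\<i> * of_real \<gamma> / 2) * (bitv a - bitv b))"

definition LHS :: "nat \<Rightarrow> nat \<Rightarrow> (bool list \<Rightarrow> bool) \<Rightarrow> real
    \<Rightarrow> bool list \<Rightarrow> bool list \<Rightarrow> bool list \<Rightarrow> complex" where
  "LHS n k T \<gamma> z1 z0 zm = clause_expect n k
     (\<lambda>\<sigma>. phase \<gamma> (sat T z1 \<sigma>) (sat T zm \<sigma>) * bitv (sat T z0 \<sigma>))"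

end

theory Submission
  imports Defs "HOL-Library.FuncSet"
begin

lemma fiber_card:
  "card {\<sigma>. set \<sigma> \<subseteq> A \<and> map w \<sigma> = ws} = (\<Prod>q<length ws. card {p\<in>A. w p = ws!q})"
proof (induction ws)
  case Nil
  have "{\<sigma>. set \<sigma> \<subseteq> A \<and> map w \<sigma> = []} = {[]}" by auto
  then show ?case by simp
next
  case (Cons s ws)
  have "{\<sigma>. set \<sigma> \<subseteq> A \<and> map w \<sigma> = s # ws} =
     (\<lambda>(p, \<tau>). p # \<tau>) ` ({p\<in>A. w p = s} \<times> {\<tau>. set \<tau> \<subseteq> A \<and> map w \<tau> = ws})"
  proof (intro set_eqI iffI)
    fix x assume "x \<in> {\<sigma>. set \<sigma> \<subseteq> A \<and> map w \<sigma> = s # ws}"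
    then show "x \<in> (\<lambda>(p, \<tau>). p # \<tau>) ` ({p\<in>A. w p = s} \<times> {\<tau>. set \<tau> \<subseteq> A \<and> map w \<tau> = ws})"
      by (cases x) auto
  qed auto
  moreover have "inj_on (\<lambda>(p, \<tau>). p # \<tau>) X" for X :: "('a \<times> 'a list) set"
    by (auto simp: inj_on_def)
  ultimately have "card {\<sigma>. set \<sigma> \<subseteq> A \<and> map w \<sigma> = s # ws} =
     card {p\<in>A. w p = s} * card {\<tau>. set \<tau> \<subseteq> A \<and> map w \<tau> = ws}"
    by (simp add: card_image card_cartesian_product)
  then show ?case using Cons by (simp add: prod.lessThan_Suc_shift del: prod.lessThan_Suc)
qed

lemma prod_group_count:
  fixes h :: "'a::finite \<Rightarrow> 'b::comm_monoid_mult"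
  shows "(\<Prod>q<length ws. h (ws!q)) = (\<Prod>s\<in>UNIV. h s ^ card {j. j < length ws \<and> ws!j = s})"
proof -
  have "(\<Prod>q<length ws. h (ws!q)) = (\<Prod>s\<in>UNIV. prod (\<lambda>q. h (ws!q)) {x. x \<in> {..<length ws} \<and> ws!x = s})"
    by (rule prod.group[symmetric]) auto
  also have "\<dots> = (\<Prod>s\<in>UNIV. h s ^ card {j. j < length ws \<and> ws!j = s})"
  proof (rule prod.cong[OF refl])
    fix s
    have "prod (\<lambda>q. h (ws!q)) {x. x \<in> {..<length ws} \<and> ws!x = s} = prod (\<lambda>q. h s) {x. x \<in> {..<length ws} \<and> ws!x = s}"
      by (rule prod.cong) auto
    then show "prod (\<lambda>q. h (ws!q)) {x. x \<in> {..<length ws} \<and> ws!x = s} = h s ^ card {j. j < length ws \<and> ws!j = s}"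
      by simp
  qed
  finally show ?thesis .
qed

lemma sum_card_count:
  fixes f :: "nat \<Rightarrow> 'a::finite"
  shows "(\<Sum>s\<in>UNIV. card {j. j < k \<and> f j = s}) = k"
proof -
  have "(\<Sum>s\<in>UNIV. sum (\<lambda>_. 1::nat) {x. x \<in> {..<k} \<and> f x = s}) = sum (\<lambda>_. 1) {..<k}"
    by (rule sum.group) auto
  then show ?thesis by simp
qed

lemma part1:
  fixes k n :: nat and T :: "bool list \<Rightarrow> bool" and \<gamma> :: real
    and z1 z0 zm :: "bool list"
  shows "LHS n k T \<gamma> z1 z0 zm =
      (1 / 2 ^ k) * (\<Sum>y\<in>(UNIV :: config set). \<Sum>kk\<in>Pk k.
         of_nat (card (Zset T k y kk)) *
         (\<Prod>s\<in>(UNIV :: config set).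
            (of_nat (cbn n z1 z0 zm s + cbn n z1 z0 zm (ccompl s)) / of_nat n) ^ kk s) *
         phase \<gamma> (fst y) (snd (snd y)) * bitv (fst (snd y)))"
proof -
  define wf :: "nat \<times> bool \<Rightarrow> config" where "wf = (\<lambda>(l,\<nu>). (z1!l \<noteq> \<nu>, z0!l \<noteq> \<nu>, zm!l \<noteq> \<nu>))"
  define A where "A = {..<n} \<times> (UNIV::bool set)"
  define c where "c = (\<lambda>s. card {p\<in>A. wf p = s})"
  define g where "g = (\<lambda>ws::config list. phase \<gamma> (T (map fst ws)) (T (map (snd\<circ>snd) ws)) * bitv (T (map (fst\<circ>snd) ws)))"
  define L where "L = {ws::config list. set ws \<subseteq> UNIV \<and> length ws = k}"
  have finL: "finite L" unfolding L_def by (rule finite_lists_length_eq) simp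
  have C: "clauses n k = {\<sigma>. set \<sigma> \<subseteq> A \<and> length \<sigma> = k}" by (auto simp: clauses_def A_def)
  have cardA: "card A = 2 * n" by (simp add: A_def card_cartesian_product)
  have finA: "finite A" by (simp add: A_def)
  have cardC: "card (clauses n k) = (2*n)^k" unfolding C using card_lists_length_eq[OF finA] cardA by simp
  have finC: "finite (clauses n k)" unfolding C using finite_lists_length_eq[OF finA] .
  have f_eq: "phase \<gamma> (sat T z1 \<sigma>) (sat T zm \<sigma>) * bitv (sat T z0 \<sigma>) = g (map wf \<sigma>)" for \<sigma>
    by (simp add: sat_def g_def wf_def o_def case_prod_unfold)
  have S1: "(\<Sum>\<sigma>\<in>clauses n k. g (map wf \<sigma>)) = (\<Sum>ws\<in>L. g ws * of_nat (\<Prod>q<k. c (ws!q)))"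
  proof -
    have "(\<Sum>\<sigma>\<in>clauses n k. g (map wf \<sigma>)) = (\<Sum>ws\<in>L. \<Sum>\<sigma>\<in>{\<sigma>. \<sigma> \<in> clauses n k \<and> map wf \<sigma> = ws}. g (map wf \<sigma>))"
      by (rule sum.group[symmetric]) (use finL finC in \<open>auto simp: L_def C\<close>)
    also have "\<dots> = (\<Sum>ws\<in>L. g ws * of_nat (card {\<sigma>. \<sigma> \<in> clauses n k \<and> map wf \<sigma> = ws}))"
    proof (rule sum.cong[OF refl])
      fix ws
      have "(\<Sum>\<sigma>\<in>{\<sigma>. \<sigma> \<in> clauses n k \<and> map wf \<sigma> = ws}. g (map wf \<sigma>)) = (\<Sum>\<sigma>\<in>{\<sigma>. \<sigma> \<in> clauses n k \<and> map wf \<sigma> = ws}. g ws)"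
        by (rule sum.cong) auto
      then show "(\<Sum>\<sigma>\<in>{\<sigma>. \<sigma> \<in> clauses n k \<and> map wf \<sigma> = ws}. g (map wf \<sigma>)) = g ws * of_nat (card {\<sigma>. \<sigma> \<in> clauses n k \<and> map wf \<sigma> = ws})"
        by (simp add: mult.commute)
    qed
    also have "\<dots> = (\<Sum>ws\<in>L. g ws * of_nat (\<Prod>q<k. c (ws!q)))"
    proof (rule sum.cong[OF refl])
      fix ws assume "ws \<in> L"
      then have lw: "length ws = k" by (simp add: L_def)
      have "{\<sigma>. \<sigma> \<in> clauses n k \<and> map wf \<sigma> = ws} = {\<sigma>. set \<sigma> \<subseteq> A \<and> map wf \<sigma> = ws}"
        using lw by (auto simp: C)
      then show "g ws * of_nat (card {\<sigma>. \<sigma> \<in> clauses n k \<and> map wf \<sigma> = ws}) = g ws * of_nat (\<Prod>q<k. c (ws!q))"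
        using fiber_card[of A wf ws] lw by (simp add: c_def)
    qed
    finally show ?thesis .
  qed
  have c_eq: "of_nat (cbn n z1 z0 zm s + cbn n z1 z0 zm (ccompl s)) = (of_nat (c s) :: complex)" for s
  proof -
    obtain a b d where s: "s = (a,b,d)" by (cases s) auto
    have "{p\<in>A. wf p = s} = (\<lambda>l. (l,False)) ` {j. j < n \<and> (z1 ! j, z0 ! j, zm ! j) = s}
       \<union> (\<lambda>l. (l,True)) ` {j. j < n \<and> (z1 ! j, z0 ! j, zm ! j) = ccompl s}"
      by (auto simp: A_def wf_def s ccompl_def image_iff)
    moreover have "card (\<dots>) = cbn n z1 z0 zm s + cbn n z1 z0 zm (ccompl s)"
      unfolding cbn_def
      by (subst card_Un_disjoint) (auto simp: card_image inj_on_def)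
    ultimately show ?thesis by (simp add: c_def)
  qed
  have c_eq2: "of_nat (cbn n z1 z0 zm s) + of_nat (cbn n z1 z0 zm (ccompl s)) = (of_nat (c s) :: complex)" for s
    using c_eq[of s] by simp
  define key where "key = (\<lambda>(w1::bool list,w0::bool list,wm::bool list). ((T w1, T w0, T wm), cbn k w1 w0 wm))"
  define Tr where "Tr = {(w1::bool list,w0::bool list,wm::bool list). length w1 = k \<and> length w0 = k \<and> length wm = k}"
  define unz where "unz = (\<lambda>ws::config list. (map fst ws, map (fst\<circ>snd) ws, map (snd\<circ>snd) ws))"
  have Tr_img: "Tr = unz ` L"
  proof (intro set_eqI iffI)
    fix t assume "t \<in> Tr"
    then obtain a b d where t: "t = (a,b,d)" "length a = k" "length b = k" "length d = k"
      by (auto simp: Tr_def)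
    then have "t = unz (zip a (zip b d))" "zip a (zip b d) \<in> L"
      by (auto simp: unz_def L_def list_eq_iff_nth_eq)
    then show "t \<in> unz ` L" by blast
  qed (auto simp: Tr_def unz_def L_def)
  have inj_unz: "inj_on unz L"
  proof (rule inj_onI)
    fix x y assume "unz x = unz y"
    then have "map fst x = map fst y" "map (fst\<circ>snd) x = map (fst\<circ>snd) y" "map (snd\<circ>snd) x = map (snd\<circ>snd) y"
      by (auto simp: unz_def)
    then have "map fst x = map fst y" "map snd x = map snd y"
      by (auto simp: list_eq_iff_nth_eq prod_eq_iff)
    then show "x = y" by (simp add: pair_list_eqI)
  qed
  have finTr: "finite Tr" using Tr_img finL by simp
  define F where "F = (\<lambda>kk::config\<Rightarrow>nat. \<Prod>s\<in>(UNIV :: config set).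
            (of_nat (cbn n z1 z0 zm s + cbn n z1 z0 zm (ccompl s)) / (of_nat n :: complex)) ^ kk s)"
  define Hh where "Hh = (\<lambda>y::config. phase \<gamma> (fst y) (snd (snd y)) * bitv (fst (snd y)))"
  have finPk: "finite (Pk k)"
  proof (rule finite_subset)
    show "Pk k \<subseteq> PiE UNIV (\<lambda>_. {..k})"
    proof
      fix kk assume "kk \<in> Pk k"
      then have "kk s \<le> k" for s unfolding Pk_def
        using member_le_sum[of s UNIV kk] by simp
      then show "kk \<in> PiE UNIV (\<lambda>_. {..k})" by (auto simp: PiE_iff)
    qed
  qed (simp add: finite_PiE)
  have S2: "(\<Sum>y\<in>(UNIV :: config set). \<Sum>kk\<in>Pk k. of_nat (card (Zset T k y kk)) * F kk * Hh y)
      = (\<Sum>t\<in>Tr. F (snd (key t)) * Hh (fst (key t)))"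
  proof -
    have "(\<Sum>y\<in>(UNIV :: config set). \<Sum>kk\<in>Pk k. of_nat (card (Zset T k y kk)) * F kk * Hh y)
       = (\<Sum>(y,kk)\<in>UNIV \<times> Pk k. of_nat (card (Zset T k y kk)) * F kk * Hh y)"
      by (rule sum.cartesian_product)
    also have "\<dots> = (\<Sum>yk\<in>UNIV \<times> Pk k. \<Sum>t\<in>{t. t \<in> Tr \<and> key t = yk}. F (snd (key t)) * Hh (fst (key t)))"
    proof (rule sum.cong[OF refl])
      fix yk :: "config \<times> (config \<Rightarrow> nat)" assume "yk \<in> UNIV \<times> Pk k"
      obtain y kk where yk: "yk = (y,kk)" by (cases yk) auto
      have Z: "Zset T k y kk = {t. t \<in> Tr \<and> key t = yk}"
        by (auto simp: Zset_def Tr_def key_def yk prod_eq_iff)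
      have "(\<Sum>t\<in>{t. t \<in> Tr \<and> key t = yk}. F (snd (key t)) * Hh (fst (key t)))
          = (\<Sum>t\<in>{t. t \<in> Tr \<and> key t = yk}. F kk * Hh y)"
        by (rule sum.cong) (auto simp: yk)
      then show "(case yk of (y,kk) \<Rightarrow> of_nat (card (Zset T k y kk)) * F kk * Hh y) =
          (\<Sum>t\<in>{t. t \<in> Tr \<and> key t = yk}. F (snd (key t)) * Hh (fst (key t)))"
        by (simp add: yk Z)
    qed
    also have "\<dots> = (\<Sum>t\<in>Tr. F (snd (key t)) * Hh (fst (key t)))"
    proof (rule sum.group)
      show "key ` Tr \<subseteq> UNIV \<times> Pk k"
      proof
        fix x assume "x \<in> key ` Tr"
        then obtain a b d where x: "x = key (a,b,d)" by auto
        have "(\<Sum>s\<in>UNIV. cbn k a b d s) = k" unfolding cbn_def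
          by (rule sum_card_count)
        then show "x \<in> UNIV \<times> Pk k" by (simp add: x key_def Pk_def)
      qed
    qed (use finTr finPk in auto)
    finally show ?thesis .
  qed
  have S3: "(\<Sum>t\<in>Tr. F (snd (key t)) * Hh (fst (key t))) = (\<Sum>ws\<in>L. F (snd (key (unz ws))) * Hh (fst (key (unz ws))))"
    unfolding Tr_img by (rule sum.reindex[OF inj_unz, unfolded comp_def])
  have S4: "F (snd (key (unz ws))) * Hh (fst (key (unz ws))) = g ws * of_nat (\<Prod>q<k. c (ws!q)) / of_nat n ^ k"
    if "ws \<in> L" for ws
  proof -
    have lw: "length ws = k" using that by (simp add: L_def)
    have "cbn k (map fst ws) (map (fst\<circ>snd) ws) (map (snd\<circ>snd) ws) s = card {j. j < length ws \<and> ws!j = s}" for s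
      unfolding cbn_def lw[symmetric]
      by (rule arg_cong[where f=card]) (auto simp: prod_eq_iff)
    then have "F (snd (key (unz ws))) = (\<Prod>s\<in>UNIV. (of_nat (c s) / of_nat n) ^ card {j. j < length ws \<and> ws!j = s})"
      by (simp add: F_def key_def unz_def c_eq2)
    also have "\<dots> = (\<Prod>q<length ws. of_nat (c (ws!q)) / of_nat n)"
      by (rule prod_group_count[symmetric])
    also have "\<dots> = of_nat (\<Prod>q<k. c (ws!q)) / of_nat n ^ k"
      by (simp add: lw prod_dividef)
    finally have "F (snd (key (unz ws))) = of_nat (\<Prod>q<k. c (ws!q)) / of_nat n ^ k" .
    moreover have "Hh (fst (key (unz ws))) = g ws"
      by (simp add: Hh_def key_def unz_def g_def)
    ultimately show ?thesis by simp
  qed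
  have "LHS n k T \<gamma> z1 z0 zm = (\<Sum>ws\<in>L. g ws * of_nat (\<Prod>q<k. c (ws!q))) / (2 * of_nat n) ^ k"
    unfolding LHS_def clause_expect_def f_eq S1 cardC by simp
  also have "\<dots> = (1 / 2 ^ k) * (\<Sum>ws\<in>L. g ws * of_nat (\<Prod>q<k. c (ws!q)) / of_nat n ^ k)"
    by (simp add: sum_divide_distrib power_mult_distrib mult.commute)
  also have "\<dots> = (1 / 2 ^ k) * (\<Sum>y\<in>(UNIV :: config set). \<Sum>kk\<in>Pk k. of_nat (card (Zset T k y kk)) * F kk * Hh y)"
    using S2 S3 S4 by simp
  finally show ?thesis by (simp add: F_def Hh_def mult.assoc)
qed

theorem mainTheorem10:
  fixes k n :: nat and T :: "bool list \<Rightarrow> bool" and \<gamma> :: real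
    and z1 z0 zm :: "bool list"
  assumes "k \<ge> 1" "n \<ge> 1"
    and "length z1 = n" "length z0 = n" "length zm = n"
  shows "LHS n k T \<gamma> z1 z0 zm =
      (1 / 2 ^ k) * (\<Sum>y\<in>(UNIV :: config set). \<Sum>kk\<in>Pk k.
         of_nat (card (Zset T k y kk)) *
         (\<Prod>s\<in>(UNIV :: config set).
            (of_nat (cbn n z1 z0 zm s + cbn n z1 z0 zm (ccompl s)) / of_nat n) ^ kk s) *
         phase \<gamma> (fst y) (snd (snd y)) * bitv (fst (snd y)))
    \<and> (\<forall>u1 u0 um. length u1 = n \<and> length u0 = n \<and> length um = n \<and>
         (\<forall>a b. cbn n u1 u0 um (False, a, b) + cbn n u1 u0 um (True, \<not> a, \<not> b)
              = cbn n z1 z0 zm (False, a, b) + cbn n z1 z0 zm (True, \<not> a, \<not> b))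
         \<longrightarrow> LHS n k T \<gamma> u1 u0 um = LHS n k T \<gamma> z1 z0 zm)"
proof (rule conjI[OF part1], intro allI impI)
  fix u1 u0 um :: "bool list"
  assume h: "length u1 = n \<and> length u0 = n \<and> length um = n \<and>
         (\<forall>a b. cbn n u1 u0 um (False, a, b) + cbn n u1 u0 um (True, \<not> a, \<not> b)
              = cbn n z1 z0 zm (False, a, b) + cbn n z1 z0 zm (True, \<not> a, \<not> b))"
  have eq: "cbn n u1 u0 um s + cbn n u1 u0 um (ccompl s) = cbn n z1 z0 zm s + cbn n z1 z0 zm (ccompl s)" for s
  proof -
    obtain a b d where s: "s = (a,b,d)" by (cases s) auto
    show ?thesis
    proof (cases a)
      case True
      then show ?thesis using h[THEN conjunct2, THEN conjunct2, THEN conjunct2, rule_format, of "\<not> b" "\<not> d"]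
        by (simp add: s ccompl_def add.commute)
    next
      case False
      then show ?thesis using h[THEN conjunct2, THEN conjunct2, THEN conjunct2, rule_format, of b d]
        by (simp add: s ccompl_def)
    qed
  qed
  show "LHS n k T \<gamma> u1 u0 um = LHS n k T \<gamma> z1 z0 zm"
    unfolding part1 eq ..
qed

end
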